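(* Let $W_2\in\{M_2,S_2\}$ and let $\phi:W_2\to W_2$ be a linear map with $\sigma_{\mathcal{K}}(\phi(A))=\sigma_{\mathcal{K}}(A)$ for all $A\in W_2$. If $A\in W_2$ has two distinct strict boundary L-eigenvalues, then $$\sigma_{\mathcal{K}}^{int}(A)=\sigma_{\mathcal{K}}^{int}(\phi(A))\neq\emptyset\quad\text{and}\quad \sigma_{\mathcal{K}}^{bd}(A)=\sigma_{\mathcal{K}}^{bd}(\phi(A)).$$
   Context: $M_2$: real $2\times2$ matrices; $S_2$: symmetric ones. Lorentz cone $\mathcal{K}=\{(x_1,x_2)^T:|x_1|\le x_2\}$. A real $\lambda$ is an L-eigenvalue of $A$ if there is a nonzero $x\in\mathcal{K}$ with $(A-\lambda I)x\in\mathcal{K}$ and $x^T(A-\lambda I)x=0$; $\sigma_{\mathcal{K}}(A)$ is the set of L-eigenvalues; $\sigma^{int}_{\mathcal{K}}(A)$ (resp. $\sigma^{bd}_{\mathcal{K}}(A)$) consists of those with such an $x$ in the interior (resp. on the boundary) of $\mathcal{K}$. For $A=\begin{bmatrix}a&b\\c&d\end{bmatrix}$, a boundary L-eigenvalue $\lambda$ is of type $+$ if $\lambda=\frac{a+d+b+c}{2}$ and $a-d\le c-b$, of type $-$ if $\lambda=\frac{a+d-b-c}{2}$ and $a-d\le b-c$; it is strict if it is of type $+$ with $a-d<c-b$ or of type $-$ with $a-d<b-c$ (if of both types, strict when at least one of these strict inequalities holds). *)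

theory Defs
  imports "HOL-Analysis.Analysis"
begin

text \<open>Real 2x2 matrices are "real^2^2"; entry (i,j) is A$i$j; a=A$1$1, b=A$1$2, c=A$2$1, d=A$2$2.\<close>

definition lorentz_cone :: "(real^2) set" where
  "lorentz_cone = {x. \<bar>x$1\<bar> \<le> x$2}"

definition sym_mats :: "(real^2^2) set" where
  "sym_mats = {A. transpose A = A}"

definition L_eig_vec :: "real^2^2 \<Rightarrow> real \<Rightarrow> real^2 \<Rightarrow> bool" where
  "L_eig_vec A lam x \<longleftrightarrow> x \<noteq> 0 \<and> x \<in> lorentz_cone \<and>
     (A - lam *\<^sub>R mat 1) *v x \<in> lorentz_cone \<and> x \<bullet> ((A - lam *\<^sub>R mat 1) *v x) = 0"

definition L_spec :: "real^2^2 \<Rightarrow> real set" where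
  "L_spec A = {lam. \<exists>x. L_eig_vec A lam x}"

definition L_spec_int :: "real^2^2 \<Rightarrow> real set" where
  "L_spec_int A = {lam. \<exists>x. L_eig_vec A lam x \<and> x \<in> interior lorentz_cone}"

definition L_spec_bd :: "real^2^2 \<Rightarrow> real set" where
  "L_spec_bd A = {lam. \<exists>x. L_eig_vec A lam x \<and> x \<in> frontier lorentz_cone}"

definition strict_bd_L_eig :: "real^2^2 \<Rightarrow> real \<Rightarrow> bool" where
  "strict_bd_L_eig A lam \<longleftrightarrow> lam \<in> L_spec_bd A \<and>
     ((lam = (A$1$1 + A$2$2 + A$1$2 + A$2$1) / 2 \<and> A$1$1 - A$2$2 < A$2$1 - A$1$2) \<or>
      (lam = (A$1$1 + A$2$2 - A$1$2 - A$2$1) / 2 \<and> A$1$1 - A$2$2 < A$1$2 - A$2$1))"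

end

theory Submission
  imports Defs
begin

lemma vec2_eq_iff: "(x::real^2) = y \<longleftrightarrow> x$1 = y$1 \<and> x$2 = y$2"
  by (simp add: vec_eq_iff forall_2)

lemma mat2_eq_iff: "(X::real^2^2) = Y \<longleftrightarrow> X$1$1 = Y$1$1 \<and> X$1$2 = Y$1$2 \<and> X$2$1 = Y$2$1 \<and> X$2$2 = Y$2$2"
  by (simp add: vec_eq_iff forall_2)

lemma mv1[simp]: "((X::real^2^2) *v x)$1 = X$1$1 * x$1 + X$1$2 * x$2"
  by (simp add: matrix_vector_mult_def sum_2)
lemma mv2[simp]: "((X::real^2^2) *v x)$2 = X$2$1 * x$1 + X$2$2 * x$2"
  by (simp add: matrix_vector_mult_def sum_2)
lemma inner2: "(x::real^2) \<bullet> y = x$1 * y$1 + x$2 * y$2"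
  by (simp add: inner_vec_def sum_2)
lemma mat1_entries[simp]: "(mat 1 :: real^2^2)$1$1 = 1" "(mat 1 :: real^2^2)$1$2 = 0"
   "(mat 1 :: real^2^2)$2$1 = 0" "(mat 1 :: real^2^2)$2$2 = 1"
  by (simp_all add: mat_def)

definition mk2 :: "real \<Rightarrow> real \<Rightarrow> real \<Rightarrow> real \<Rightarrow> real^2^2" where
  "mk2 a b c d = vector [vector [a,b], vector [c,d]]"
lemma mk2_entries[simp]: "(mk2 a b c d)$1$1 = a" "(mk2 a b c d)$1$2 = b"
   "(mk2 a b c d)$2$1 = c" "(mk2 a b c d)$2$2 = d"
  by (simp_all add: mk2_def)
definition v2 :: "real \<Rightarrow> real \<Rightarrow> real^2" where "v2 x y = vector [x,y]"
lemma v2_entries[simp]: "(v2 x y)$1 = x" "(v2 x y)$2 = y" by (simp_all add: v2_def)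

lemma closed_K: "closed lorentz_cone"
proof -
  have "lorentz_cone = {x::real^2. \<bar>x$1\<bar> \<le> x$2}" by (simp add: lorentz_cone_def)
  moreover have "closed {x::real^2. \<bar>x$1\<bar> \<le> x$2}"
    by (intro closed_Collect_le continuous_intros)
  ultimately show ?thesis by simp
qed

lemma interior_K: "interior lorentz_cone = {x. \<bar>x$1\<bar> < x$2}"
proof
  have "open {x::real^2. \<bar>x$1\<bar> < x$2}"
    by (intro open_Collect_less continuous_intros)
  moreover have "{x::real^2. \<bar>x$1\<bar> < x$2} \<subseteq> lorentz_cone" by (auto simp: lorentz_cone_def)
  ultimately show "{x. \<bar>x$1\<bar> < x$2} \<subseteq> interior lorentz_cone"
    using interior_maximal by metis
next
  show "interior lorentz_cone \<subseteq> {x. \<bar>x$1\<bar> < x$2}"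
  proof
    fix x :: "real^2" assume x: "x \<in> interior lorentz_cone"
    then obtain e where e: "e > 0" "ball x e \<subseteq> lorentz_cone" unfolding mem_interior by blast
    define y where "y = x - (e/2) *\<^sub>R (axis 2 1 :: real^2)"
    have "dist x y = norm ((e/2) *\<^sub>R (axis 2 1 :: real^2))" unfolding y_def dist_norm by simp
    also have "\<dots> = e/2" using e by (simp only: norm_scaleR norm_axis_1)
    finally have "y \<in> ball x e" using e by simp
    hence "y \<in> lorentz_cone" using e(2) by (rule subsetD[rotated])
    moreover have "y$1 = x$1" "y$2 = x$2 - e/2" by (simp_all add: y_def axis_def)
    ultimately have "\<bar>x$1\<bar> \<le> x$2 - e/2" by (simp add: lorentz_cone_def)
    thus "x \<in> {x. \<bar>x$1\<bar> < x$2}" using e by simp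
  qed
qed

lemma frontier_K: "frontier lorentz_cone = {x. \<bar>x$1\<bar> = x$2}"
  unfolding frontier_def closure_closed[OF closed_K] interior_K
  unfolding lorentz_cone_def by force

definition lp :: "real^2^2 \<Rightarrow> real" where "lp X = (X$1$1 + X$2$2 + X$1$2 + X$2$1)/2"
definition lm :: "real^2^2 \<Rightarrow> real" where "lm X = (X$1$1 + X$2$2 - X$1$2 - X$2$1)/2"
definition pp :: "real^2^2 \<Rightarrow> real" where "pp X = (X$2$1 - X$1$2) - (X$1$1 - X$2$2)"
definition mm :: "real^2^2 \<Rightarrow> real" where "mm X = (X$1$2 - X$2$1) - (X$1$1 - X$2$2)"
definition isev :: "real^2^2 \<Rightarrow> real \<Rightarrow> real^2 \<Rightarrow> bool" where
  "isev X l x \<longleftrightarrow> (X$1$1 - l)*x$1 + X$1$2*x$2 = 0 \<and> X$2$1*x$1 + (X$2$2 - l)*x$2 = 0"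

lemma L_eig_vec_iff: "L_eig_vec X l x \<longleftrightarrow>
   (\<bar>x$1\<bar> < x$2 \<and> isev X l x) \<or> (x$1 = x$2 \<and> x$2 > 0 \<and> l = lp X \<and> pp X \<ge> 0)
   \<or> (x$1 = - x$2 \<and> x$2 > 0 \<and> l = lm X \<and> mm X \<ge> 0)" (is "?L \<longleftrightarrow> ?R")
proof -
  define y1 where "y1 = (X$1$1 - l)*x$1 + X$1$2*x$2"
  define y2 where "y2 = X$2$1*x$1 + (X$2$2 - l)*x$2"
  have L: "?L \<longleftrightarrow> x \<noteq> 0 \<and> \<bar>x$1\<bar> \<le> x$2 \<and> \<bar>y1\<bar> \<le> y2 \<and> x$1*y1 + x$2*y2 = 0"
    by (simp add: L_eig_vec_def lorentz_cone_def inner2 y1_def y2_def algebra_simps)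
  have x0: "x \<noteq> 0 \<longleftrightarrow> x$1 \<noteq> 0 \<or> x$2 \<noteq> 0" by (simp add: vec2_eq_iff)
  show ?thesis
  proof
    assume ?L
    hence H: "x \<noteq> 0" "\<bar>x$1\<bar> \<le> x$2" "\<bar>y1\<bar> \<le> y2" "x$1*y1 + x$2*y2 = 0" using L by auto
    have x2p: "x$2 > 0" using H(1,2) x0 by auto
    show ?R
    proof (cases "\<bar>x$1\<bar> < x$2")
      case True
      have "x$1*y1 \<ge> - (\<bar>x$1\<bar> * \<bar>y1\<bar>)"
        by (metis abs_ge_minus_self abs_mult minus_le_iff)
      moreover have "\<bar>x$1\<bar> * \<bar>y1\<bar> \<le> \<bar>x$1\<bar> * y2" using H(3) by (simp add: mult_left_mono)
      ultimately have "(x$2 - \<bar>x$1\<bar>) * y2 \<le> 0" using H(4) by (simp add: algebra_simps)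
      moreover have "y2 \<ge> 0" using H(3) by linarith
      ultimately have "y2 = 0" using True by (simp add: mult_le_0_iff)
      hence "y1 = 0" using H(3) by simp
      thus ?R using True \<open>y2 = 0\<close> by (simp add: isev_def y1_def y2_def)
    next
      case False
      hence "x$1 = x$2 \<or> x$1 = - x$2" using H(2) by linarith
      thus ?R
      proof
        assume e: "x$1 = x$2"
        have "x$2 * (y1 + y2) = 0" using H(4) e by (simp add: algebra_simps)
        hence s: "y1 + y2 = 0" using x2p by simp
        hence "(X$1$1 - l + X$1$2 + X$2$1 + X$2$2 - l) * x$2 = 0"
          by (simp add: y1_def y2_def e algebra_simps)
        hence l: "l = lp X" using x2p by (simp add: lp_def)
        have "y2 \<ge> 0" using H(3) by linarith
        hence "(X$2$1 + X$2$2 - l) * x$2 \<ge> 0" by (simp add: y2_def e algebra_simps)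
        hence "X$2$1 + X$2$2 - l \<ge> 0" using x2p by (simp add: zero_le_mult_iff)
        hence "pp X \<ge> 0" using l by (simp add: lp_def pp_def)
        thus ?R using e x2p l by simp
      next
        assume e: "x$1 = - x$2"
        have "x$2 * (y2 - y1) = 0" using H(4) e by (simp add: algebra_simps)
        hence s: "y2 - y1 = 0" using x2p by simp
        hence "(X$2$2 - l - X$2$1 + X$1$1 - l - X$1$2) * x$2 = 0"
          by (simp add: y1_def y2_def e algebra_simps)
        hence l: "l = lm X" using x2p by (simp add: lm_def)
        have "y2 \<ge> 0" using H(3) by linarith
        hence "(X$2$2 - l - X$2$1) * x$2 \<ge> 0" by (simp add: y2_def e algebra_simps)
        hence "X$2$2 - l - X$2$1 \<ge> 0" using x2p by (simp add: zero_le_mult_iff)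
        hence "mm X \<ge> 0" using l unfolding lm_def mm_def by argo
        thus ?R using e x2p l by simp
      qed
    qed
  next
    assume ?R
    thus ?L
    proof (elim disjE conjE)
      assume "\<bar>x$1\<bar> < x$2" "isev X l x"
      thus ?L unfolding L using x0 by (auto simp: isev_def y1_def y2_def)
    next
      assume e: "x$1 = x$2" "x$2 > 0" "l = lp X" "pp X \<ge> 0"
      have "y1 + y2 = (X$1$1 + X$1$2 + X$2$1 + X$2$2 - 2*l) * x$2"
        by (simp add: y1_def y2_def e(1) algebra_simps)
      also have "\<dots> = 0" using e(3) by (simp add: lp_def)
      finally have s: "y1 = - y2" by simp
      have "y2 = (X$2$1 + X$2$2 - l) * x$2" by (simp add: y2_def e(1) algebra_simps)
      moreover have "X$2$1 + X$2$2 - l = pp X / 2" using e(3) unfolding lp_def pp_def by argo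
      ultimately have "y2 = x$2 * (pp X / 2)" by simp
      hence "y2 \<ge> 0" using e by (simp only:) (intro mult_nonneg_nonneg; simp)
      thus ?L unfolding L using e x0 s by simp
    next
      assume e: "x$1 = - x$2" "x$2 > 0" "l = lm X" "mm X \<ge> 0"
      have "y2 - y1 = (X$2$2 - X$2$1 - X$1$2 + X$1$1 - 2*l) * x$2"
        by (simp add: y1_def y2_def e(1) algebra_simps)
      also have "\<dots> = 0" using e(3) by (simp add: lm_def)
      finally have s: "y1 = y2" by simp
      have "y2 = (X$2$2 - X$2$1 - l) * x$2" by (simp add: y2_def e(1) algebra_simps)
      moreover have "X$2$2 - X$2$1 - l = mm X / 2" using e(3) unfolding lm_def mm_def by argo
      ultimately have "y2 = x$2 * (mm X / 2)" by simp
      hence "y2 \<ge> 0" using e by (simp only:) (intro mult_nonneg_nonneg; simp)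
      thus ?L unfolding L using e x0 s by simp
    qed
  qed
qed

definition intev :: "real^2^2 \<Rightarrow> real \<Rightarrow> bool" where
  "intev X l \<longleftrightarrow> (\<exists>r. \<bar>r\<bar> < 1 \<and> (X$1$1 - l)*r + X$1$2 = 0 \<and> X$2$1*r + X$2$2 - l = 0)"

lemma intev_vec: "(\<exists>x. \<bar>x$1\<bar> < x$2 \<and> isev X l x) \<longleftrightarrow> intev X l"
proof
  assume "\<exists>x. \<bar>x$1\<bar> < x$2 \<and> isev X l x"
  then obtain x where x: "\<bar>x$1\<bar> < x$2" "isev X l x" by blast
  define u where "u = x$1" define w where "w = x$2"
  have p: "w > 0" using x(1) unfolding w_def by linarith
  define r where "r = u / w"
  have ur: "u = r * w" using p by (simp add: r_def)
  have "\<bar>r\<bar> < 1" using x(1) unfolding r_def u_def w_def by (simp add: abs_divide)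
  moreover have "((X$1$1 - l)*r + X$1$2) * w = 0" using x(2) unfolding isev_def u_def[symmetric] w_def[symmetric] ur
    by (simp add: algebra_simps)
  moreover have "(X$2$1*r + X$2$2 - l) * w = 0" using x(2) unfolding isev_def u_def[symmetric] w_def[symmetric] ur
    by (simp add: algebra_simps)
  ultimately have "\<bar>r\<bar> < 1 \<and> (X$1$1 - l)*r + X$1$2 = 0 \<and> X$2$1*r + X$2$2 - l = 0" using p by simp
  thus "intev X l" unfolding intev_def by blast
next
  assume "intev X l"
  then obtain r where r: "\<bar>r\<bar> < 1" "(X$1$1 - l)*r + X$1$2 = 0" "X$2$1*r + X$2$2 - l = 0"
    unfolding intev_def by blast
  have "\<bar>(v2 r 1)$1\<bar> < (v2 r 1)$2 \<and> isev X l (v2 r 1)" using r by (simp add: isev_def)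
  thus "\<exists>x. \<bar>x$1\<bar> < x$2 \<and> isev X l x" by blast
qed

lemma L_spec_iff: "l \<in> L_spec X \<longleftrightarrow>
  (l = lp X \<and> pp X \<ge> 0) \<or> (l = lm X \<and> mm X \<ge> 0) \<or> intev X l"
proof
  assume "l \<in> L_spec X"
  then obtain x where "L_eig_vec X l x" by (auto simp: L_spec_def)
  thus "(l = lp X \<and> pp X \<ge> 0) \<or> (l = lm X \<and> mm X \<ge> 0) \<or> intev X l"
    unfolding L_eig_vec_iff using intev_vec by blast
next
  assume H: "(l = lp X \<and> pp X \<ge> 0) \<or> (l = lm X \<and> mm X \<ge> 0) \<or> intev X l"
  show "l \<in> L_spec X"
  proof (cases "intev X l")
    case True
    then obtain x where "\<bar>x$1\<bar> < x$2 \<and> isev X l x" using intev_vec by blast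
    hence "L_eig_vec X l x" unfolding L_eig_vec_iff by simp
    thus ?thesis unfolding L_spec_def by blast
  next
    case False
    hence "L_eig_vec X l (v2 1 1) \<or> L_eig_vec X l (v2 (-1) 1)" using H unfolding L_eig_vec_iff by auto
    thus ?thesis unfolding L_spec_def by blast
  qed
qed

lemma L_spec_bd_iff: "l \<in> L_spec_bd X \<longleftrightarrow> (l = lp X \<and> pp X \<ge> 0) \<or> (l = lm X \<and> mm X \<ge> 0)"
proof
  assume "l \<in> L_spec_bd X"
  then obtain x where "L_eig_vec X l x" "\<bar>x$1\<bar> = x$2" by (auto simp: L_spec_bd_def frontier_K)
  thus "(l = lp X \<and> pp X \<ge> 0) \<or> (l = lm X \<and> mm X \<ge> 0)"
    unfolding L_eig_vec_iff by auto
next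
  assume "(l = lp X \<and> pp X \<ge> 0) \<or> (l = lm X \<and> mm X \<ge> 0)"
  moreover
  { assume "l = lp X \<and> pp X \<ge> 0"
    hence "L_eig_vec X l (v2 1 1) \<and> v2 1 1 \<in> frontier lorentz_cone"
      unfolding L_eig_vec_iff frontier_K by simp }
  moreover
  { assume "l = lm X \<and> mm X \<ge> 0"
    hence "L_eig_vec X l (v2 (-1) 1) \<and> v2 (-1) 1 \<in> frontier lorentz_cone"
      unfolding L_eig_vec_iff frontier_K by simp }
  ultimately show "l \<in> L_spec_bd X" unfolding L_spec_bd_def by blast
qed

lemma L_spec_int_iff: "l \<in> L_spec_int X \<longleftrightarrow> intev X l"
proof
  assume "l \<in> L_spec_int X"
  then obtain x where "L_eig_vec X l x" "\<bar>x$1\<bar> < x$2" by (auto simp: L_spec_int_def interior_K)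
  thus "intev X l" unfolding L_eig_vec_iff using intev_vec by auto
next
  assume "intev X l"
  then obtain x where "\<bar>x$1\<bar> < x$2 \<and> isev X l x" using intev_vec by blast
  hence "L_eig_vec X l x \<and> x \<in> interior lorentz_cone" unfolding L_eig_vec_iff interior_K by simp
  thus "l \<in> L_spec_int X" unfolding L_spec_int_def by blast
qed

definition strict :: "real^2^2 \<Rightarrow> bool" where "strict X \<longleftrightarrow> pp X > 0 \<and> mm X > 0"

lemma strict_intev_ex: assumes "strict X" shows "\<exists>l. intev X l"
proof -
  define q where "q r = X$2$1*r^2 + (X$2$2 - X$1$1)*r - X$1$2" for r
  have q1: "q 1 = pp X" by (simp add: q_def pp_def)
  have qm1: "q (-1) = - mm X" by (simp add: q_def mm_def)
  have "continuous_on {-1..1} q" unfolding q_def by (intro continuous_intros)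
  then obtain r where r: "-1 \<le> r" "r \<le> 1" "q r = 0"
    using IVT'[of q "-1" 0 1] q1 qm1 assms by (auto simp: strict_def)
  have "r \<noteq> 1" "r \<noteq> -1" using r q1 qm1 assms by (auto simp: strict_def)
  hence "\<bar>r\<bar> < 1" using r by auto
  moreover have "(X$1$1 - (X$2$1*r + X$2$2))*r + X$1$2 = - q r"
    by (simp add: q_def power2_eq_square algebra_simps)
  ultimately show ?thesis unfolding intev_def using r(3) by (intro exI[of _ "X$2$1*r + X$2$2"] exI[of _ r]) auto
qed

lemma strict_intev_unique: assumes "strict X" "intev X l" "intev X l'" shows "l = l'"
proof -
  obtain r where r: "\<bar>r\<bar> < 1" "(X$1$1 - l)*r + X$1$2 = 0" "X$2$1*r + X$2$2 - l = 0"
    using assms(2) unfolding intev_def by blast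
  obtain ss where ss: "\<bar>ss\<bar> < 1" "(X$1$1 - l')* ss + X$1$2 = 0" "X$2$1* ss + X$2$2 - l' = 0"
    using assms(3) unfolding intev_def by blast
  define a where "a = X$1$1" define b where "b = X$1$2" define c where "c = X$2$1" define d where "d = X$2$2"
  have l: "l = c*r + d" and l': "l' = c* ss + d" using r ss by (simp_all add: c_def d_def)
  have qr: "c*r^2 + (d - a)*r - b = 0" using r(2) l by (simp add: a_def b_def power2_eq_square algebra_simps)
  have qs: "c* ss^2 + (d - a)* ss - b = 0" using ss(2) l' by (simp add: a_def b_def power2_eq_square algebra_simps)
  have P: "c + d - a - b > 0" and M: "b - c - a + d > 0" using assms(1)
    by (simp_all add: strict_def pp_def mm_def a_def b_def c_def d_def)
  show ?thesis
  proof (cases "r = ss")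
    case True thus ?thesis using l l' by simp
  next
    case False
    have "(r - ss) * (c*(r + ss) + (d - a)) = 0" using qr qs by (simp add: power2_eq_square algebra_simps)
    hence e1: "d - a = - c*(r+ss)" using False by simp
    have "b = (d-a)*r + c*r*r" using qr by (simp add: power2_eq_square algebra_simps)
    also have "\<dots> = -c*(r+ss)*r + c*r*r" using e1 by simp
    finally have e2: "b = - c*r* ss" by (simp add: algebra_simps)
    have "c + d - a - b = c*((1 - r)*(1 - ss))" using e1 e2 by (simp add: algebra_simps)
    moreover have "b - c - a + d = (- c)*((1 + r)*(1 + ss))" using e1 e2 by (simp add: algebra_simps)
    moreover have "(1 - r)*(1 - ss) > 0" "(1 + r)*(1 + ss) > 0" using r(1) ss(1) by (auto intro: mult_pos_pos)
    ultimately have "c*((1 - r)*(1 - ss)) > 0" "(-c)*((1 + r)*(1 + ss)) > 0" "(1 - r)*(1 - ss) > 0" "(1 + r)*(1 + ss) > 0"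
      using P M by auto
    hence "c > 0" "-c > 0" by (metis zero_less_mult_pos2)+
    thus ?thesis by simp
  qed
qed

lemma strict_spec: "strict X \<Longrightarrow> L_spec X = {lp X, lm X} \<union> {l. intev X l}"
  by (rule set_eqI) (simp add: L_spec_iff strict_def)

lemma strict_bd: "strict X \<Longrightarrow> L_spec_bd X = {lp X, lm X}"
  by (rule set_eqI) (simp add: L_spec_bd_iff strict_def)

lemma lp_lin[simp]: "lp (X + Y) = lp X + lp Y" "lp (t *\<^sub>R X) = t * lp X" "lp (X - Y) = lp X - lp Y"
  by (simp_all add: lp_def algebra_simps add_divide_distrib diff_divide_distrib)
lemma lm_lin[simp]: "lm (X + Y) = lm X + lm Y" "lm (t *\<^sub>R X) = t * lm X" "lm (X - Y) = lm X - lm Y"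
  by (simp_all add: lm_def algebra_simps add_divide_distrib diff_divide_distrib)
lemma pp_lin[simp]: "pp (X + Y) = pp X + pp Y" "pp (t *\<^sub>R X) = t * pp X" "pp (X - Y) = pp X - pp Y"
  by (simp_all add: pp_def algebra_simps)
lemma mm_lin[simp]: "mm (X + Y) = mm X + mm Y" "mm (t *\<^sub>R X) = t * mm X" "mm (X - Y) = mm X - mm Y"
  by (simp_all add: mm_def algebra_simps)

lemma sym_iff: "X \<in> sym_mats \<longleftrightarrow> X$1$2 = X$2$1"
  by (auto simp: sym_mats_def mat2_eq_iff transpose_def)

locale pres =
  fixes W :: "(real^2^2) set" and \<phi> :: "real^2^2 \<Rightarrow> real^2^2"
  assumes W: "W = UNIV \<or> W = sym_mats"
    and cl: "\<forall>B\<in>W. \<phi> B \<in> W"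
    and add: "\<forall>B\<in>W. \<forall>C\<in>W. \<phi> (B + C) = \<phi> B + \<phi> C"
    and hom: "\<forall>r. \<forall>B\<in>W. \<phi> (r *\<^sub>R B) = r *\<^sub>R \<phi> B"
    and sp: "\<forall>B\<in>W. L_spec (\<phi> B) = L_spec B"
begin

lemma W_add: "B \<in> W \<Longrightarrow> C \<in> W \<Longrightarrow> B + C \<in> W"
  using W by (auto simp: sym_iff)
lemma W_scale: "B \<in> W \<Longrightarrow> r *\<^sub>R B \<in> W"
  using W by (auto simp: sym_iff)
lemma W_sym: "X$1$2 = X$2$1 \<Longrightarrow> X \<in> W"
  using W by (auto simp: sym_iff)
lemma W_diff: "B \<in> W \<Longrightarrow> C \<in> W \<Longrightarrow> B - C \<in> W"
  using W by (auto simp: sym_iff)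

lemma lin: "B \<in> W \<Longrightarrow> C \<in> W \<Longrightarrow> \<phi> (B + t *\<^sub>R C) = \<phi> B + t *\<^sub>R \<phi> C"
  using add hom W_scale by simp

lemma spec_line: "B \<in> W \<Longrightarrow> C \<in> W \<Longrightarrow> L_spec (\<phi> B + t *\<^sub>R \<phi> C) = L_spec (B + t *\<^sub>R C)"
  using lin[of B C t] sp W_add W_scale by metis

lemma phi_diff: "B \<in> W \<Longrightarrow> C \<in> W \<Longrightarrow> \<phi> (B - C) = \<phi> B - \<phi> C"
  using lin[of B C "-1"] by simp

lemma phi_inj0: assumes B: "B \<in> W" "\<phi> B = 0" shows "B = 0"
proof -
  define C where "C = mk2 0 0 0 1"
  have CW: "C \<in> W" by (rule W_sym) (simp add: C_def)
  have eq: "L_spec (C + t *\<^sub>R B) = L_spec C" for t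
    using spec_line[OF CW B(1), of t] sp CW B(2) by simp
  have SC: "L_spec C \<subseteq> {1/2, 1}"
  proof
    fix l assume "l \<in> L_spec C"
    hence "(l = lp C \<and> pp C \<ge> 0) \<or> (l = lm C \<and> mm C \<ge> 0) \<or> intev C l" by (simp add: L_spec_iff)
    moreover have "lp C = 1/2" "lm C = 1/2" by (simp_all add: C_def lp_def lm_def)
    moreover have "intev C l \<Longrightarrow> l = 1" by (auto simp: intev_def C_def)
    ultimately show "l \<in> {1/2, 1}" by auto
  qed
  define K where "K = \<bar>pp B\<bar> + \<bar>mm B\<bar> + \<bar>lp B\<bar> + \<bar>lm B\<bar> + 1"
  have K: "K \<ge> 1" by (simp add: K_def)
  define t where "t = 1 / (4*K)"
  have t: "t > 0" "t * K = 1/4" using K by (simp_all add: t_def)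
  have bnd: "\<bar>t * z\<bar> \<le> 1/4" if "\<bar>z\<bar> \<le> K" for z
  proof -
    have "\<bar>t * z\<bar> = t * \<bar>z\<bar>" using t by (simp add: abs_mult)
    also have "\<dots> \<le> t * K" using that t by (intro mult_left_mono) auto
    finally show ?thesis using t by simp
  qed
  have b1: "\<bar>t * pp B\<bar> \<le> 1/4" "\<bar>t * mm B\<bar> \<le> 1/4" "\<bar>t * lp B\<bar> \<le> 1/4" "\<bar>t * lm B\<bar> \<le> 1/4"
    by (intro bnd; simp add: K_def)+
  have ppC: "pp C = 1" "mm C = 1" "lp C = 1/2" "lm C = 1/2" by (simp_all add: C_def pp_def mm_def lp_def lm_def)
  have "lp (C + t *\<^sub>R B) \<in> L_spec (C + t *\<^sub>R B)"
    using b1 ppC by (subst L_spec_iff) (auto simp: abs_le_iff)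
  hence "1/2 + t * lp B \<in> {1/2, 1}" using eq SC ppC by auto
  hence "t * lp B = 0" using b1 by (auto simp: abs_le_iff)
  hence lpB: "lp B = 0" using t by simp
  have "lm (C + t *\<^sub>R B) \<in> L_spec (C + t *\<^sub>R B)"
    using b1 ppC by (subst L_spec_iff) (auto simp: abs_le_iff)
  hence "1/2 + t * lm B \<in> {1/2, 1}" using eq SC ppC by auto
  hence "t * lm B = 0" using b1 by (auto simp: abs_le_iff)
  hence lmB: "lm B = 0" using t by simp
  define a where "a = B$1$1" define b where "b = B$1$2"
  have d: "B$2$2 = -a" and c: "B$2$1 = -b" using lpB lmB unfolding lp_def lm_def a_def b_def by argo+
  have "1 \<in> L_spec C" by (subst L_spec_iff) (auto simp: intev_def C_def intro: exI[of _ 0])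
  hence i1: "1 \<in> L_spec (C + 1 *\<^sub>R B)" "1 \<in> L_spec (C + (-1) *\<^sub>R B)" using eq by blast+
  have "intev (C + 1 *\<^sub>R B) 1" using i1(1) ppC lpB lmB by (auto simp: L_spec_iff)
  then obtain r where r: "\<bar>r\<bar> < 1" "(a - 1)*r + b = 0" "-b*r - a = 0"
    unfolding intev_def by (auto simp: C_def a_def b_def c d)
  have "intev (C + (-1) *\<^sub>R B) 1" using i1(2) ppC lpB lmB by (auto simp: L_spec_iff)
  then obtain u where u: "\<bar>u\<bar> < 1" "(-a - 1)* u - b = 0" "b* u + a = 0"
    unfolding intev_def by (auto simp: C_def a_def b_def c d)
  have ar: "a = -b*r" using r by simp
  have br: "b*(1 - r*r) = r" using r(2) ar by (simp add: algebra_simps)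
  have "a*(1 - r*r) = -r*(b*(1 - r*r))" using ar by (simp add: algebra_simps)
  hence ra: "a*(1 - r*r) = - (r*r)" using br by simp
  have "r*r < 1" using r(1) abs_square_less_1[of r] by (simp add: power2_eq_square)
  hence r1: "1 - r*r > 0" by simp
  have a1: "a \<le> 0"
  proof (rule ccontr)
    assume "\<not> a \<le> 0" hence "a*(1 - r*r) > 0" using r1 by simp
    thus False using ra by simp
  qed
  have au: "a = -b* u" using u by simp
  have bu: "b*(1 - u*u) = - u" using u(2) au by (simp add: algebra_simps)
  have "a*(1 - u*u) = -u*(b*(1 - u*u))" using au by (simp add: algebra_simps)
  hence ua: "a*(1 - u*u) = u*u" using bu by simp
  have "u*u < 1" using u(1) abs_square_less_1[of u] by (simp add: power2_eq_square)
  hence u1: "1 - u*u > 0" by simp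
  have a2: "a \<ge> 0"
  proof (rule ccontr)
    assume "\<not> a \<ge> 0" hence "a*(1 - u*u) < 0" using u1 by (simp add: mult_neg_pos)
    thus False using ua by simp
  qed
  have a0: "a = 0" using a1 a2 by simp
  hence "r = 0" using ra by simp
  hence "b = 0" using r by simp
  thus "B = 0" using a0 c d by (simp add: mat2_eq_iff a_def b_def)
qed


lemma phi_inj: "B \<in> W \<Longrightarrow> C \<in> W \<Longrightarrow> \<phi> B = \<phi> C \<Longrightarrow> B = C"
  using phi_diff[of B C] phi_inj0[of "B - C"] W_diff by simp

definition emb :: "real^3 \<Rightarrow> real^2^2" where "emb v = mk2 (v$1) (v$2) (v$2) (v$3)"
definition crd :: "real^2^2 \<Rightarrow> real^3" where "crd X = vector [X$1$1, X$1$2, X$2$2]"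

lemma phi_surj: assumes Y: "Y \<in> W" shows "\<exists>B\<in>W. \<phi> B = Y"
  using W
proof
  assume WU: "W = UNIV"
  have "linear \<phi>"
    by (rule linearI) (use add hom WU in auto)
  moreover have "inj \<phi>" using phi_inj WU by (auto simp: inj_def)
  ultimately have "surj \<phi>" using linear_injective_imp_surjective by blast
  thus ?thesis using WU by (metis UNIV_I surjD)
next
  assume WS: "W = sym_mats"
  have embW: "emb v \<in> W" for v by (rule W_sym) (simp add: emb_def)
  have emb_add: "emb (u + v) = emb u + emb v" for u v by (simp add: emb_def mat2_eq_iff)
  have emb_scale: "emb (c *\<^sub>R v) = c *\<^sub>R emb v" for c v by (simp add: emb_def mat2_eq_iff)
  have crd_add: "crd (X + Z) = crd X + crd Z" for X Z by (simp add: crd_def vec_eq_iff forall_3)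
  have crd_scale: "crd (c *\<^sub>R X) = c *\<^sub>R crd X" for c X by (simp add: crd_def vec_eq_iff forall_3)
  have crd_inj: "X = Z" if "X \<in> W" "Z \<in> W" "crd X = crd Z" for X Z
    using that WS unfolding mat2_eq_iff by (auto simp: sym_iff crd_def vec_eq_iff forall_3)
  define g where "g = crd \<circ> \<phi> \<circ> emb"
  have "linear g"
  proof (rule linearI)
    fix u v show "g (u + v) = g u + g v"
      unfolding g_def o_def emb_add using add embW crd_add by simp
  next
    fix c u show "g (c *\<^sub>R u) = c *\<^sub>R g u"
      unfolding g_def o_def emb_scale using hom embW crd_scale by simp
  qed
  moreover have "inj g"
  proof (rule injI)
    fix u v assume "g u = g v"
    hence "\<phi> (emb u) = \<phi> (emb v)" unfolding g_def o_def using crd_inj cl embW by blast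
    hence "emb u = emb v" using phi_inj embW by blast
    thus "u = v" by (simp add: emb_def mat2_eq_iff vec_eq_iff forall_3)
  qed
  ultimately have "surj g" using linear_injective_imp_surjective by blast
  then obtain v where "g v = crd Y" by (metis surjD)
  hence "\<phi> (emb v) = Y" unfolding g_def o_def using crd_inj cl embW Y by blast
  thus ?thesis using embW by blast
qed
end

lemma quad3: fixes c0 c1 c2 t1 t2 t3 :: real
  assumes "t1 \<noteq> t2" "t1 \<noteq> t3" "t2 \<noteq> t3"
    "c0 + c1*t1 + c2*t1^2 = 0" "c0 + c1*t2 + c2*t2^2 = 0" "c0 + c1*t3 + c2*t3^2 = 0"
  shows "c0 = 0 \<and> c1 = 0 \<and> c2 = 0"
proof -
  have "(t1 - t2) * (c1 + c2*(t1 + t2)) = 0" using assms(4,5) by (simp add: power2_eq_square algebra_simps)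
  hence e1: "c1 + c2*(t1 + t2) = 0" using assms(1) by simp
  have "(t1 - t3) * (c1 + c2*(t1 + t3)) = 0" using assms(4,6) by (simp add: power2_eq_square algebra_simps)
  hence e2: "c1 + c2*(t1 + t3) = 0" using assms(2) by simp
  have "c2 * (t2 - t3) = (c1 + c2*(t1 + t2)) - (c1 + c2*(t1 + t3))" by (simp add: algebra_simps)
  hence "c2 * (t2 - t3) = 0" using e1 e2 by simp
  hence c2: "c2 = 0" using assms(3) by simp
  hence c1: "c1 = 0" using e1 by simp
  thus ?thesis using c2 assms(4) by simp
qed

lemma intev_det: "intev X l \<Longrightarrow> (X$1$1 - l)*(X$2$2 - l) - X$1$2*X$2$1 = 0"
proof -
  assume "intev X l"
  then obtain r where r: "(X$1$1 - l)*r + X$1$2 = 0" "X$2$1*r + X$2$2 - l = 0" unfolding intev_def by blast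
  have eqs: "X$1$2 = -(X$1$1 - l)*r" "X$2$2 - l = - X$2$1*r" using r by (simp_all add: algebra_simps)
  have "(X$1$1 - l)*(X$2$2 - l) - X$1$2*X$2$1 = (X$1$1 - l)*(- X$2$1*r) - (-(X$1$1 - l)*r)*X$2$1"
    by (simp only: eqs)
  thus ?thesis by (simp add: algebra_simps)
qed

lemma subsingleton_finite: "(\<forall>x\<in>E. \<forall>y\<in>E. x = y) \<Longrightarrow> finite E"
  by (metis finite.simps is_singletonI' is_singleton_the_elem)

lemma three_of_infinite: assumes "infinite S" obtains t1 t2 t3 where "t1 \<in> S" "t2 \<in> S" "t3 \<in> S"
  "t1 \<noteq> t2" "t1 \<noteq> t3" "t2 \<noteq> t3"
proof -
  obtain B where "finite B" "card B = 3" "B \<subseteq> S" using infinite_arbitrarily_large[OF assms] by blast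
  then obtain x y z where "B = {x,y,z}" "x \<noteq> y" "y \<noteq> z" "x \<noteq> z" using card_3_iff by metis
  thus ?thesis using that \<open>B \<subseteq> S\<close> by auto
qed

definition pc0 :: "real^2^2 \<Rightarrow> real \<Rightarrow> real" where
  "pc0 D l = (D$1$1 - l)*(D$2$2 - l) - D$1$2*D$2$1"
definition pc1 :: "real^2^2 \<Rightarrow> real \<Rightarrow> real^2^2 \<Rightarrow> real \<Rightarrow> real" where
  "pc1 D l Y b = (D$1$1 - l)*(Y$2$2 - b) + (Y$1$1 - b)*(D$2$2 - l) - D$1$2*Y$2$1 - Y$1$2*D$2$1"

lemma det_line: "(X + t *\<^sub>R Z)$1$1 - (l + t*b) = (X$1$1 - l) + t*(Z$1$1 - b)"
   "(X + t *\<^sub>R Z)$2$2 - (l + t*b) = (X$2$2 - l) + t*(Z$2$2 - b)"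
   "(X + t *\<^sub>R Z)$1$2 = X$1$2 + t*Z$1$2" "(X + t *\<^sub>R Z)$2$1 = X$2$1 + t*Z$2$1"
  by (simp_all add: algebra_simps)

lemma branch:
  fixes D Y :: "real^2^2" and l b d :: real
  assumes d: "d > 0"
    and H: "\<forall>t. 0 < t \<longrightarrow> t < d \<longrightarrow> l + t*b \<in> L_spec (D + t *\<^sub>R Y)"
    and N1: "lp D \<noteq> l \<or> (\<exists>e>0. \<forall>t. 0 < t \<longrightarrow> t < e \<longrightarrow> pp D + t * pp Y < 0)"
    and N2: "lm D \<noteq> l \<or> (\<exists>e>0. \<forall>t. 0 < t \<longrightarrow> t < e \<longrightarrow> mm D + t * mm Y < 0)"
  shows "pc0 D l = 0 \<and> pc1 D l Y b = 0 \<and> pc0 Y b = 0"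
proof -
  obtain e1 where e1: "e1 > 0" "lp D \<noteq> l \<or> (\<forall>t. 0 < t \<longrightarrow> t < e1 \<longrightarrow> pp D + t * pp Y < 0)"
    using N1 by (metis zero_less_one)
  obtain e2 where e2: "e2 > 0" "lm D \<noteq> l \<or> (\<forall>t. 0 < t \<longrightarrow> t < e2 \<longrightarrow> mm D + t * mm Y < 0)"
    using N2 by (metis zero_less_one)
  define d' where "d' = min d (min e1 e2)"
  have d': "d' > 0" "d' \<le> d" "d' \<le> e1" "d' \<le> e2" using d e1 e2 by (auto simp: d'_def)
  define I where "I = {t. 0 < t \<and> t < d' \<and> intev (D + t *\<^sub>R Y) (l + t*b)}"
  define E1 where "E1 = {t. 0 < t \<and> t < d' \<and> l + t*b = lp D + t * lp Y \<and> pp D + t * pp Y \<ge> 0}"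
  define E2 where "E2 = {t. 0 < t \<and> t < d' \<and> l + t*b = lm D + t * lm Y \<and> mm D + t * mm Y \<ge> 0}"
  have cover: "{0<..<d'} \<subseteq> I \<union> E1 \<union> E2"
  proof
    fix t assume t: "t \<in> {0<..<d'}"
    hence "l + t*b \<in> L_spec (D + t *\<^sub>R Y)" using H d' by auto
    thus "t \<in> I \<union> E1 \<union> E2" using t unfolding L_spec_iff I_def E1_def E2_def by auto
  qed
  have fE1: "finite E1"
  proof (rule subsingleton_finite, intro ballI)
    fix x y assume xy: "x \<in> E1" "y \<in> E1"
    show "x = y"
    proof (cases "lp D \<noteq> l")
      case True
      show ?thesis
      proof (rule ccontr)
        assume "x \<noteq> y"
        have "(x - y) * (b - lp Y) = 0" using xy unfolding E1_def by (simp add: algebra_simps)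
        hence "b = lp Y" using \<open>x \<noteq> y\<close> by simp
        thus False using xy True unfolding E1_def by simp
      qed
    next
      case False
      thus ?thesis using xy e2 e1 d' unfolding E1_def by force
    qed
  qed
  have fE2: "finite E2"
  proof (rule subsingleton_finite, intro ballI)
    fix x y assume xy: "x \<in> E2" "y \<in> E2"
    show "x = y"
    proof (cases "lm D \<noteq> l")
      case True
      show ?thesis
      proof (rule ccontr)
        assume "x \<noteq> y"
        have "(x - y) * (b - lm Y) = 0" using xy unfolding E2_def by (simp add: algebra_simps)
        hence "b = lm Y" using \<open>x \<noteq> y\<close> by simp
        thus False using xy True unfolding E2_def by simp
      qed
    next
      case False
      thus ?thesis using xy e2 e1 d' unfolding E2_def by force
    qed
  qed
  have "infinite I"
  proof
    assume "finite I"
    hence "finite (I \<union> E1 \<union> E2)" using fE1 fE2 by simp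
    hence "finite {0<..<d'}" using cover finite_subset by blast
    thus False using d' infinite_Ioo[of 0 d'] by blast
  qed
  then obtain t1 t2 t3 where t: "t1 \<in> I" "t2 \<in> I" "t3 \<in> I" "t1 \<noteq> t2" "t1 \<noteq> t3" "t2 \<noteq> t3"
    by (rule three_of_infinite)
  have poly: "pc0 D l + pc1 D l Y b * t + pc0 Y b * t^2 = 0" if "t \<in> I" for t
  proof -
    have "intev (D + t *\<^sub>R Y) (l + t*b)" using that by (simp add: I_def)
    hence "((D + t *\<^sub>R Y)$1$1 - (l + t*b))*((D + t *\<^sub>R Y)$2$2 - (l + t*b)) - (D + t *\<^sub>R Y)$1$2*(D + t *\<^sub>R Y)$2$1 = 0"
      by (rule intev_det)
    thus ?thesis unfolding det_line pc0_def pc1_def by (simp add: power2_eq_square algebra_simps)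
  qed
  show ?thesis using quad3[OF t(4,5,6) poly[OF t(1)] poly[OF t(2)] poly[OF t(3)]] by simp
qed


lemma strict_line: assumes "strict A" shows "\<exists>d>0. \<forall>t. 0 < t \<longrightarrow> t < d \<longrightarrow> strict (A + t *\<^sub>R B)"
proof -
  define d where "d = min (pp A) (mm A) / (\<bar>pp B\<bar> + \<bar>mm B\<bar> + 1)"
  have pos: "pp A > 0" "mm A > 0" using assms by (auto simp: strict_def)
  have d: "d > 0" using pos by (simp add: d_def)
  have "strict (A + t *\<^sub>R B)" if t: "0 < t" "t < d" for t
  proof -
    have "t * (\<bar>pp B\<bar> + \<bar>mm B\<bar> + 1) < min (pp A) (mm A)"
      using t by (simp add: d_def pos_less_divide_eq add_pos_nonneg)
    hence "t * \<bar>pp B\<bar> < pp A" "t * \<bar>mm B\<bar> < mm A" using t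
      by (simp_all add: algebra_simps) (smt (verit) mult_nonneg_nonneg)+
    moreover have ea: "\<bar>t * pp B\<bar> = t * \<bar>pp B\<bar>" "\<bar>t * mm B\<bar> = t * \<bar>mm B\<bar>" using t by (simp_all add: abs_mult)
    moreover have "- (t * \<bar>pp B\<bar>) \<le> t * pp B" using abs_le_iff[of "t * pp B" "t * \<bar>pp B\<bar>"] ea by simp
    moreover have "- (t * \<bar>mm B\<bar>) \<le> t * mm B" using abs_le_iff[of "t * mm B" "t * \<bar>mm B\<bar>"] ea by simp
    ultimately show ?thesis by (simp add: strict_def)
  qed
  thus ?thesis using d by blast
qed

lemma neg_persist: "(x::real) < 0 \<Longrightarrow> \<exists>e>0. \<forall>t. 0 < t \<longrightarrow> t < e \<longrightarrow> x + t*y < 0"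
proof -
  assume x: "x < 0"
  define e where "e = -x / (\<bar>y\<bar> + 1)"
  have "\<bar>y\<bar> + 1 > 0" by (simp add: add_nonneg_pos)
  hence e: "e > 0" using x divide_pos_pos[of "-x" "\<bar>y\<bar> + 1"] by (simp add: e_def)
  have "x + t*y < 0" if "0 < t" "t < e" for t
  proof -
    have yp: "\<bar>y\<bar> + 1 > 0" by (simp add: add_nonneg_pos)
    have "t < -x / (\<bar>y\<bar> + 1)" using that by (simp add: e_def)
    hence "t * (\<bar>y\<bar> + 1) < -x" by (subst (asm) pos_less_divide_eq[OF yp])
    moreover have "t*y \<le> t*\<bar>y\<bar>" using that by (simp add: mult_left_mono)
    moreover have "t * (\<bar>y\<bar> + 1) = t*\<bar>y\<bar> + t" by (simp add: algebra_simps)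
    ultimately show ?thesis using that by linarith
  qed
  thus ?thesis using e by blast
qed

context pres begin

lemma pencil_branch:
  assumes A: "A \<in> W" "strict A" and l: "l = lp A \<or> l = lm A" and Y: "Y \<in> W"
    and N1: "lp (\<phi> A) \<noteq> l \<or> (\<exists>e>0. \<forall>t. 0 < t \<longrightarrow> t < e \<longrightarrow> pp (\<phi> A) + t * pp Y < 0)"
    and N2: "lm (\<phi> A) \<noteq> l \<or> (\<exists>e>0. \<forall>t. 0 < t \<longrightarrow> t < e \<longrightarrow> mm (\<phi> A) + t * mm Y < 0)"
  shows "\<exists>b. pc0 (\<phi> A) l = 0 \<and> pc1 (\<phi> A) l Y b = 0 \<and> pc0 Y b = 0"
proof -
  obtain B where B: "B \<in> W" "\<phi> B = Y" using phi_surj[OF Y] by blast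
  obtain d where d: "d > 0" "\<forall>t. 0 < t \<longrightarrow> t < d \<longrightarrow> strict (A + t *\<^sub>R B)"
    using strict_line[OF A(2)] by blast
  define b where "b = (if l = lp A then lp B else lm B)"
  have H: "\<forall>t. 0 < t \<longrightarrow> t < d \<longrightarrow> l + t*b \<in> L_spec (\<phi> A + t *\<^sub>R Y)"
  proof (intro allI impI)
    fix t assume t: "0 < t" "t < d"
    have st: "strict (A + t *\<^sub>R B)" using d t by blast
    have "l + t*b \<in> L_spec (A + t *\<^sub>R B)"
      using strict_spec[OF st] l by (auto simp: b_def)
    thus "l + t*b \<in> L_spec (\<phi> A + t *\<^sub>R Y)" using spec_line[OF A(1) B(1)] B(2) by simp
  qed
  show ?thesis using branch[OF d(1) H N1 N2] by blast
qed

lemma J_W: "W = UNIV \<Longrightarrow> mk2 0 (-1) 1 0 \<in> W" "W = UNIV \<Longrightarrow> mk2 0 1 (-1) 0 \<in> W" by simp_all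

lemma bd_match:
  assumes A: "A \<in> W" "strict A" and l: "l = lp A \<or> l = lm A"
  shows "(lp (\<phi> A) = l \<and> pp (\<phi> A) \<ge> 0) \<or> (lm (\<phi> A) = l \<and> mm (\<phi> A) \<ge> 0)"
proof (rule ccontr)
  assume C: "\<not> ?thesis"
  define D where "D = \<phi> A"
  have DW: "D \<in> W" using cl A by (simp add: D_def)
  have N1: "lp D \<noteq> l \<or> (\<exists>e>0. \<forall>t. 0 < t \<longrightarrow> t < e \<longrightarrow> pp D + t * pp Y < 0)" for Y
    using C neg_persist[of "pp D"] by (auto simp: D_def)
  have N2: "lm D \<noteq> l \<or> (\<exists>e>0. \<forall>t. 0 < t \<longrightarrow> t < e \<longrightarrow> mm D + t * mm Y < 0)" for Y
    using C neg_persist[of "mm D"] by (auto simp: D_def)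
  show False using W
  proof
    assume WU: "W = UNIV"
    obtain b where "pc0 (mk2 0 (-1) 1 0) b = 0"
      using pencil_branch[OF A l J_W(1)[OF WU]] N1 N2 unfolding D_def by blast
    hence "b*b + 1 = 0" by (simp add: pc0_def)
    thus False by (smt (verit) zero_le_square)
  next
    assume WS: "W = sym_mats"
    define Y where "Y = mk2 0 1 1 0"
    have YW: "Y \<in> W" by (rule W_sym) (simp add: Y_def)
    obtain b where b: "pc0 D l = 0" "pc1 D l Y b = 0" "pc0 Y b = 0"
      using pencil_branch[OF A l YW] N1 N2 unfolding D_def by blast
    have sym: "D$1$2 = D$2$1" using DW WS sym_iff by blast
    define m1 where "m1 = D$1$1 - l" define m2 where "m2 = D$1$2" define m3 where "m3 = D$2$2 - l"
    have c0: "m1*m3 = m2*m2" using b(1) sym by (simp add: pc0_def m1_def m2_def m3_def)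
    have "(b - 1)*(b + 1) = 0" using b(3) by (simp add: pc0_def Y_def algebra_simps)
    hence "b = 1 \<or> b = -1" by auto
    thus False
    proof
      assume b1: "b = 1"
      have s: "m1 + m3 = -2*m2" using b(2) sym b1 by (simp add: pc1_def Y_def m1_def m2_def m3_def algebra_simps)
      have "(m1 - m3)^2 = (m1 + m3)^2 - 4*(m1*m3)" by (simp add: power2_eq_square algebra_simps)
      also have "\<dots> = 0" using s c0 by (simp add: power2_eq_square algebra_simps)
      finally have "m1 = m3" by simp
      hence "lp D = l \<and> pp D = 0" using s sym unfolding lp_def pp_def m1_def m2_def m3_def by argo
      thus False using C by (simp add: D_def)
    next
      assume b1: "b = -1"
      have s: "m1 + m3 = 2*m2" using b(2) sym b1 by (simp add: pc1_def Y_def m1_def m2_def m3_def algebra_simps)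
      have "(m1 - m3)^2 = (m1 + m3)^2 - 4*(m1*m3)" by (simp add: power2_eq_square algebra_simps)
      also have "\<dots> = 0" using s c0 by (simp add: power2_eq_square algebra_simps)
      finally have "m1 = m3" by simp
      hence "lm D = l \<and> mm D = 0" using s sym unfolding lm_def mm_def m1_def m2_def m3_def by argo
      thus False using C by (simp add: D_def)
    qed
  qed
qed

end

context pres begin

lemma strict_phi:
  assumes A: "A \<in> W" "strict A" and ne: "lp A \<noteq> lm A"
  shows "strict (\<phi> A) \<and> ((lp (\<phi> A) = lp A \<and> lm (\<phi> A) = lm A) \<or> (lp (\<phi> A) = lm A \<and> lm (\<phi> A) = lp A))"
proof -
  define D where "D = \<phi> A"
  have DW: "D \<in> W" using cl A by (simp add: D_def)
  have m1: "(lp D = lp A \<and> pp D \<ge> 0) \<or> (lm D = lp A \<and> mm D \<ge> 0)" using bd_match[OF A] by (simp add: D_def)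
  have m2: "(lp D = lm A \<and> pp D \<ge> 0) \<or> (lm D = lm A \<and> mm D \<ge> 0)" using bd_match[OF A] by (simp add: D_def)
  have match: "(lp D = lp A \<and> lm D = lm A) \<or> (lp D = lm A \<and> lm D = lp A)" and nn: "pp D \<ge> 0" "mm D \<ge> 0"
    using m1 m2 ne by auto
  have neD: "lp D \<noteq> lm D" using match ne by auto
  have lpD: "lp D = lp A \<or> lp D = lm A" and lmD: "lm D = lp A \<or> lm D = lm A" using match by auto
  have pp0: False if pz: "pp D = 0"
  proof -
    define l where "l = lp D"
    have N2: "lm D \<noteq> l" using neD by (simp add: l_def)
    show False using W
    proof
      assume WU: "W = UNIV"
      have N1: "\<exists>e>0. \<forall>t. 0 < t \<longrightarrow> t < e \<longrightarrow> pp D + t * pp (mk2 0 1 (-1) 0) < 0"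
        using pz by (intro exI[of _ 1]) (simp add: pp_def)
      obtain b where "pc0 (mk2 0 1 (-1) 0) b = 0"
        using pencil_branch[OF A lpD J_W(2)[OF WU]] N1 N2 unfolding D_def l_def by blast
      hence "b*b + 1 = 0" by (simp add: pc0_def)
      thus False by (smt (verit) zero_le_square)
    next
      assume WS: "W = sym_mats"
      define Y where "Y = mk2 1 0 0 (-1)"
      have YW: "Y \<in> W" by (rule W_sym) (simp add: Y_def)
      have N1: "\<exists>e>0. \<forall>t. 0 < t \<longrightarrow> t < e \<longrightarrow> pp D + t * pp Y < 0"
        using pz by (intro exI[of _ 1]) (simp add: pp_def Y_def)
      obtain b where b: "pc0 D l = 0" "pc1 D l Y b = 0" "pc0 Y b = 0"
        using pencil_branch[OF A lpD YW] N1 N2 unfolding D_def l_def by blast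
      have sym: "D$1$2 = D$2$1" using DW WS sym_iff by blast
      define m1 where "m1 = D$1$1 - l" define m2 where "m2 = D$1$2" define m3 where "m3 = D$2$2 - l"
      have c0: "m1*m3 = m2*m2" using b(1) sym by (simp add: pc0_def m1_def m2_def m3_def)
      have e13: "m1 = m3" using pz sym unfolding pp_def m1_def m3_def by argo
      have "(b - 1)*(b + 1) = 0" using b(3) by (simp add: pc0_def Y_def algebra_simps)
      hence "b = 1 \<or> b = -1" by auto
      hence "m1 = 0 \<or> m3 = 0" using b(2) sym by (auto simp: pc1_def Y_def m1_def m2_def m3_def algebra_simps)
      hence "m1 = 0" "m3 = 0" using e13 by auto
      hence "m2 = 0" using c0 by simp
      hence "lm D = l" using \<open>m1 = 0\<close> \<open>m3 = 0\<close> sym unfolding lm_def m1_def m2_def m3_def by argo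
      thus False using N2 by simp
    qed
  qed
  have mm0: False if mz: "mm D = 0"
  proof -
    define l where "l = lm D"
    have N1: "lp D \<noteq> l" using neD by (simp add: l_def)
    show False using W
    proof
      assume WU: "W = UNIV"
      have N2: "\<exists>e>0. \<forall>t. 0 < t \<longrightarrow> t < e \<longrightarrow> mm D + t * mm (mk2 0 (-1) 1 0) < 0"
        using mz by (intro exI[of _ 1]) (simp add: mm_def)
      obtain b where "pc0 (mk2 0 (-1) 1 0) b = 0"
        using pencil_branch[OF A lmD J_W(1)[OF WU]] N1 N2 unfolding D_def l_def by blast
      hence "b*b + 1 = 0" by (simp add: pc0_def)
      thus False by (smt (verit) zero_le_square)
    next
      assume WS: "W = sym_mats"
      define Y where "Y = mk2 1 0 0 (-1)"
      have YW: "Y \<in> W" by (rule W_sym) (simp add: Y_def)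
      have N2: "\<exists>e>0. \<forall>t. 0 < t \<longrightarrow> t < e \<longrightarrow> mm D + t * mm Y < 0"
        using mz by (intro exI[of _ 1]) (simp add: mm_def Y_def)
      obtain b where b: "pc0 D l = 0" "pc1 D l Y b = 0" "pc0 Y b = 0"
        using pencil_branch[OF A lmD YW] N1 N2 unfolding D_def l_def by blast
      have sym: "D$1$2 = D$2$1" using DW WS sym_iff by blast
      define m1 where "m1 = D$1$1 - l" define m2 where "m2 = D$1$2" define m3 where "m3 = D$2$2 - l"
      have c0: "m1*m3 = m2*m2" using b(1) sym by (simp add: pc0_def m1_def m2_def m3_def)
      have e13: "m1 = m3" using mz sym unfolding mm_def m1_def m3_def by argo
      have "(b - 1)*(b + 1) = 0" using b(3) by (simp add: pc0_def Y_def algebra_simps)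
      hence "b = 1 \<or> b = -1" by auto
      hence "m1 = 0 \<or> m3 = 0" using b(2) sym by (auto simp: pc1_def Y_def m1_def m2_def m3_def algebra_simps)
      hence "m1 = 0" "m3 = 0" using e13 by auto
      hence "m2 = 0" using c0 by simp
      hence "lp D = l" using \<open>m1 = 0\<close> \<open>m3 = 0\<close> sym unfolding lp_def m1_def m2_def m3_def by argo
      thus False using N1 by simp
    qed
  qed
  have "strict D" using nn pp0 mm0 by (force simp: strict_def)
  thus ?thesis using match by (simp add: D_def)
qed

end

lemma abs_persist: fixes a b c d :: real assumes "\<bar>a\<bar> < \<bar>b\<bar>"
  shows "\<exists>e>0. \<forall>t. 0 < t \<longrightarrow> t < e \<longrightarrow> \<bar>a + t*c\<bar> < \<bar>b + t*d\<bar>"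
proof -
  define g where "g = \<bar>b\<bar> - \<bar>a\<bar>"
  have g: "g > 0" using assms by (simp add: g_def)
  have kp: "\<bar>c\<bar> + \<bar>d\<bar> + 1 > 0" by (simp add: add_nonneg_pos)
  define e where "e = g / (\<bar>c\<bar> + \<bar>d\<bar> + 1)"
  have e: "e > 0" using g kp by (simp add: e_def)
  have "\<bar>a + t*c\<bar> < \<bar>b + t*d\<bar>" if t: "0 < t" "t < e" for t
  proof -
    have "t * (\<bar>c\<bar> + \<bar>d\<bar> + 1) < g" using t(2) unfolding e_def by (subst (asm) pos_less_divide_eq[OF kp])
    hence lt: "t*\<bar>c\<bar> + t*\<bar>d\<bar> < g" using t(1) by (simp add: algebra_simps)
    have "\<bar>a + t*c\<bar> \<le> \<bar>a\<bar> + t*\<bar>c\<bar>" using t(1) abs_triangle_ineq[of a "t*c"] by (simp add: abs_mult)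
    moreover have "\<bar>b\<bar> - t*\<bar>d\<bar> \<le> \<bar>b + t*d\<bar>" using t(1) abs_triangle_ineq2[of b "-(t*d)"] by (simp add: abs_mult)
    ultimately show ?thesis using lt unfolding g_def by linarith
  qed
  thus ?thesis using e by blast
qed

lemma small_poly: fixes d0 c1 c2 :: real assumes "d0 \<noteq> 0"
  shows "\<exists>e>0. \<forall>t. 0 < t \<longrightarrow> t < e \<longrightarrow> d0 + c1*t + c2*t*t \<noteq> 0"
proof -
  have kp: "\<bar>c1\<bar> + \<bar>c2\<bar> + 1 > 0" by (simp add: add_nonneg_pos)
  define e where "e = min 1 (\<bar>d0\<bar> / (\<bar>c1\<bar> + \<bar>c2\<bar> + 1))"
  have e: "e > 0" using assms kp by (simp add: e_def)
  have "d0 + c1*t + c2*t*t \<noteq> 0" if t: "0 < t" "t < e" for t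
  proof
    assume z: "d0 + c1*t + c2*t*t = 0"
    have t1: "t < 1" using t by (simp add: e_def)
    have "t < \<bar>d0\<bar> / (\<bar>c1\<bar> + \<bar>c2\<bar> + 1)" using t by (simp add: e_def)
    hence "t * (\<bar>c1\<bar> + \<bar>c2\<bar> + 1) < \<bar>d0\<bar>" by (subst (asm) pos_less_divide_eq[OF kp])
    hence lt: "t*\<bar>c1\<bar> + t*\<bar>c2\<bar> < \<bar>d0\<bar>" using t(1) by (simp add: algebra_simps)
    have "\<bar>c2*t*t\<bar> \<le> t*\<bar>c2\<bar>"
    proof -
      have "\<bar>c2*t*t\<bar> = (t*\<bar>c2\<bar>)*t" using t(1) by (simp add: abs_mult)
      also have "\<dots> \<le> (t*\<bar>c2\<bar>)*1" using t1 t(1) by (intro mult_left_mono) auto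
      finally show ?thesis by simp
    qed
    moreover have "\<bar>c1*t\<bar> = t*\<bar>c1\<bar>" using t(1) by (simp add: abs_mult)
    moreover have "\<bar>d0\<bar> \<le> \<bar>c1*t\<bar> + \<bar>c2*t*t\<bar>"
    proof -
      have "d0 = -(c1*t + c2*t*t)" using z by linarith
      hence "\<bar>d0\<bar> = \<bar>c1*t + c2*t*t\<bar>" by simp
      thus ?thesis using abs_triangle_ineq by simp
    qed
    ultimately show False using lt by linarith
  qed
  thus ?thesis using e by blast
qed

lemma abs_ker: fixes x y r :: real assumes "x*r + y = 0" "\<bar>r\<bar> < 1" shows "\<bar>y\<bar> \<le> \<bar>x\<bar>"
proof -
  have "y = -(x*r)" using assms(1) by linarith
  hence "\<bar>y\<bar> = \<bar>x\<bar> * \<bar>r\<bar>" by (simp add: abs_mult)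
  also have "\<dots> \<le> \<bar>x\<bar> * 1" using assms(2) by (intro mult_left_mono) auto
  finally show ?thesis by simp
qed

lemma core:
  fixes m11 m12 m21 m22 n11 n12 n21 n22 :: real
  assumes noker: "\<And>w1 w2. w1 \<noteq> 0 \<or> w2 \<noteq> 0 \<Longrightarrow> m11*w1 + m12*w2 = 0 \<Longrightarrow> m21*w1 + m22*w2 = 0 \<Longrightarrow> \<bar>w2\<bar> < \<bar>w1\<bar>"
    and nz: "m11 \<noteq> 0 \<or> m12 \<noteq> 0 \<or> m21 \<noteq> 0 \<or> m22 \<noteq> 0"
  shows "\<exists>e>0. \<forall>t r. 0 < t \<longrightarrow> t < e \<longrightarrow> \<bar>r\<bar> < 1 \<longrightarrow>
     (m11 + t*n11)*r + (m12 + t*n12) = 0 \<longrightarrow> (m21 + t*n21)*r + (m22 + t*n22) = 0 \<longrightarrow> False"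
proof (cases "m11*m22 - m12*m21 = 0")
  case False
  obtain e where e: "e > 0" "\<forall>t. 0 < t \<longrightarrow> t < e \<longrightarrow>
      (m11*m22 - m12*m21) + (m11*n22 + n11*m22 - m12*n21 - n12*m21)*t + (n11*n22 - n12*n21)*t*t \<noteq> 0"
    using small_poly[OF False] by blast
  have "False" if t: "0 < t" "t < e" and r: "(m11 + t*n11)*r + (m12 + t*n12) = 0" "(m21 + t*n21)*r + (m22 + t*n22) = 0" for t r
  proof -
    define x11 where "x11 = m11 + t*n11" define x12 where "x12 = m12 + t*n12"
    define x21 where "x21 = m21 + t*n21" define x22 where "x22 = m22 + t*n22"
    have eqs: "x12 = - x11*r" "x22 = - x21*r" using r by (simp_all add: x11_def x12_def x21_def x22_def algebra_simps)
    have "x11*x22 - x12*x21 = x11*(- x21*r) - (- x11*r)*x21" by (simp only: eqs)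
    hence "x11*x22 - x12*x21 = 0" by (simp add: algebra_simps)
    moreover have "x11*x22 - x12*x21 = (m11*m22 - m12*m21) + (m11*n22 + n11*m22 - m12*n21 - n12*m21)*t + (n11*n22 - n12*n21)*t*t"
      by (simp add: x11_def x12_def x21_def x22_def algebra_simps)
    ultimately show False using e t by auto
  qed
  thus ?thesis using e(1) by blast
next
  case True
  show ?thesis
  proof (cases "m12 \<noteq> 0 \<or> m11 \<noteq> 0")
    case nz2: True
    have "\<bar>m11\<bar> < \<bar>m12\<bar>"
      using noker[of m12 "-m11"] nz2 True by (simp add: algebra_simps)
    then obtain e where e: "e > 0" "\<forall>t. 0 < t \<longrightarrow> t < e \<longrightarrow> \<bar>m11 + t*n11\<bar> < \<bar>m12 + t*n12\<bar>"
      using abs_persist by blast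
    have "False" if t: "0 < t" "t < e" "\<bar>r\<bar> < 1" and r: "(m11 + t*n11)*r + (m12 + t*n12) = 0" for t r
      using abs_ker[OF r t(3)] e t by force
    thus ?thesis using e(1) by blast
  next
    case False
    hence z: "m12 = 0" "m11 = 0" by auto
    hence nz2: "m22 \<noteq> 0 \<or> m21 \<noteq> 0" using nz by auto
    have "\<bar>m21\<bar> < \<bar>m22\<bar>"
      using noker[of m22 "-m21"] nz2 z by (simp add: algebra_simps)
    then obtain e where e: "e > 0" "\<forall>t. 0 < t \<longrightarrow> t < e \<longrightarrow> \<bar>m21 + t*n21\<bar> < \<bar>m22 + t*n22\<bar>"
      using abs_persist by blast
    have "False" if t: "0 < t" "t < e" "\<bar>r\<bar> < 1" and r: "(m21 + t*n21)*r + (m22 + t*n22) = 0" for t r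
      using abs_ker[OF r t(3)] e t by force
    thus ?thesis using e(1) by blast
  qed
qed

lemma count3:
  fixes l1 l2 p1 p2 b t1 t2 t3 :: real
  assumes ne: "l1 \<noteq> l2" and b: "b \<noteq> 0" and d: "t1 \<noteq> t2" "t1 \<noteq> t3" "t2 \<noteq> t3"
    and pos: "t1 > 0" "t2 > 0" "t3 > 0"
    and H: "\<And>t. t \<in> {t1,t2,t3} \<Longrightarrow> (l1 = l1 + t*p1 \<or> l1 = l2 + t*p2) \<and> (l1 + t*b = l1 + t*p1 \<or> l1 + t*b = l2 + t*p2)"
  shows False
proof -
  have Q: "l1 = l2 + t*p2 \<or> l1 + t*b = l2 + t*p2" if "t \<in> {t1,t2,t3}" for t
  proof (rule ccontr)
    assume "\<not> ?thesis"
    hence "t*p1 = 0" "t*b = t*p1" using H[OF that] by auto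
    moreover have "t > 0" using that pos by auto
    ultimately show False using b by simp
  qed
  have nA: False if "x \<noteq> y" "l1 = l2 + x*p2" "l1 = l2 + y*p2" for x y
  proof -
    have "(x - y)*p2 = 0" using that by (simp add: algebra_simps)
    hence "p2 = 0" using that(1) by simp
    thus False using that ne by simp
  qed
  have nB: False if "x \<noteq> y" "l1 + x*b = l2 + x*p2" "l1 + y*b = l2 + y*p2" for x y
  proof -
    have "(x - y)*(p2 - b) = 0" using that by (simp add: algebra_simps)
    hence "p2 = b" using that(1) by simp
    thus False using that ne by simp
  qed
  have q1: "l1 = l2 + t1*p2 \<or> l1 + t1*b = l2 + t1*p2" by (rule Q) simp
  have q2: "l1 = l2 + t2*p2 \<or> l1 + t2*b = l2 + t2*p2" by (rule Q) simp
  have q3: "l1 = l2 + t3*p2 \<or> l1 + t3*b = l2 + t3*p2" by (rule Q) simp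
  show False using q1 q2 q3 nA[OF d(1)] nA[OF d(2)] nA[OF d(3)] nB[OF d(1)] nB[OF d(2)] nB[OF d(3)] by argo
qed

lemma intev_line: "intev (D + t *\<^sub>R Y) (l + t*g) \<Longrightarrow> \<exists>r. \<bar>r\<bar> < 1 \<and>
   ((D$1$1 - l) + t*(Y$1$1 - g))*r + (D$1$2 + t*Y$1$2) = 0 \<and> (D$2$1 + t*Y$2$1)*r + ((D$2$2 - l) + t*(Y$2$2 - g)) = 0"
  unfolding intev_def by (auto simp: algebra_simps)

context pres begin

lemma no_small_intev:
  assumes sD: "strict D" and ni: "\<not> intev D l"
  shows "\<exists>e>0. \<forall>t. 0 < t \<longrightarrow> t < e \<longrightarrow> \<not> intev (D + t *\<^sub>R Y) (l + t*g)"
proof -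
  have noker: "\<bar>w2\<bar> < \<bar>w1\<bar>" if w: "w1 \<noteq> 0 \<or> w2 \<noteq> 0" "(D$1$1 - l)*w1 + D$1$2*w2 = 0" "D$2$1*w1 + (D$2$2 - l)*w2 = 0" for w1 w2
  proof (rule ccontr)
    assume "\<not> \<bar>w2\<bar> < \<bar>w1\<bar>"
    hence le: "\<bar>w1\<bar> \<le> \<bar>w2\<bar>" by simp
    hence w2: "w2 \<noteq> 0" using w(1) by auto
    show False
    proof (cases "\<bar>w1\<bar> < \<bar>w2\<bar>")
      case True
      define r where "r = w1 / w2"
      have "\<bar>r\<bar> < 1" using True w2 by (simp add: r_def abs_divide)
      moreover have "(D$1$1 - l)*r + D$1$2 = ((D$1$1 - l)*w1 + D$1$2*w2) / w2" using w2 by (simp add: r_def add_divide_distrib)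
      moreover have "D$2$1*r + D$2$2 - l = (D$2$1*w1 + (D$2$2 - l)*w2) / w2" using w2 by (simp add: r_def add_divide_distrib diff_divide_distrib)
      ultimately have "intev D l" unfolding intev_def using w by auto
      thus False using ni by simp
    next
      case False
      hence "w1 = w2 \<or> w1 = - w2" using le by linarith
      thus False
      proof
        assume e: "w1 = w2"
        have "(D$1$1 - l + D$1$2) * w2 = 0" "(D$2$1 + D$2$2 - l) * w2 = 0" using w e by (simp_all add: algebra_simps)
        hence "D$1$1 - l + D$1$2 = 0" "D$2$1 + D$2$2 - l = 0" using w2 by simp_all
        hence "pp D = 0" unfolding pp_def by argo
        thus False using sD by (simp add: strict_def)
      next
        assume e: "w1 = - w2"
        have "(D$1$2 - (D$1$1 - l)) * w2 = 0" "((D$2$2 - l) - D$2$1) * w2 = 0" using w e by (simp_all add: algebra_simps)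
        hence "D$1$2 - (D$1$1 - l) = 0" "(D$2$2 - l) - D$2$1 = 0" using w2 by simp_all
        hence "mm D = 0" unfolding mm_def by argo
        thus False using sD by (simp add: strict_def)
      qed
    qed
  qed
  have nz: "D$1$1 - l \<noteq> 0 \<or> D$1$2 \<noteq> 0 \<or> D$2$1 \<noteq> 0 \<or> D$2$2 - l \<noteq> 0"
  proof (rule ccontr)
    assume "\<not> ?thesis"
    hence "pp D = 0" by (simp add: pp_def)
    thus False using sD by (simp add: strict_def)
  qed
  obtain e where e: "e > 0" "\<forall>t r. 0 < t \<longrightarrow> t < e \<longrightarrow> \<bar>r\<bar> < 1 \<longrightarrow>
     ((D$1$1 - l) + t*(Y$1$1 - g))*r + (D$1$2 + t*Y$1$2) = 0 \<longrightarrow> (D$2$1 + t*Y$2$1)*r + ((D$2$2 - l) + t*(Y$2$2 - g)) = 0 \<longrightarrow> False"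
    using core[of "D$1$1 - l" "D$1$2" "D$2$1" "D$2$2 - l" "Y$1$1 - g" "Y$1$2" "Y$2$1" "Y$2$2 - g", OF noker nz] by blast
  show ?thesis using e intev_line by metis
qed

end

context pres begin

lemma int_match:
  assumes A: "A \<in> W" "strict A" and ne: "lp A \<noteq> lm A" and i1: "intev A l1" and i2: "intev (\<phi> A) l2"
  shows "l1 = l2"
proof (rule ccontr)
  assume n: "l1 \<noteq> l2"
  define D where "D = \<phi> A"
  have sD: "strict D" and match: "(lp D = lp A \<and> lm D = lm A) \<or> (lp D = lm A \<and> lm D = lp A)"
    using strict_phi[OF A ne] by (simp_all add: D_def)
  have i2': "intev D l2" using i2 by (simp add: D_def)
  have uA: "intev A l \<Longrightarrow> l = l1" for l using strict_intev_unique[OF A(2)] i1 by blast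
  have uD: "intev D l \<Longrightarrow> l = l2" for l using strict_intev_unique[OF sD] i2' by blast
  have eqS: "L_spec D = L_spec A" using sp A(1) by (simp add: D_def)
  have "l1 \<in> L_spec D" using eqS i1 by (simp add: L_spec_iff)
  hence "l1 = lp D \<or> l1 = lm D \<or> intev D l1" by (auto simp: L_spec_iff)
  hence l1in: "l1 = lp A \<or> l1 = lm A" using uD n match by blast
  have "l2 \<in> L_spec D" using i2' by (simp add: L_spec_iff)
  hence "l2 \<in> L_spec A" using eqS by simp
  hence "l2 = lp A \<or> l2 = lm A \<or> intev A l2" by (auto simp: L_spec_iff)
  hence l2in: "l2 = lp A \<or> l2 = lm A" using uA n by blast
  have niD: "\<not> intev D l1" using uD n by blast
  obtain r where r: "\<bar>r\<bar> < 1" "(A$1$1 - l1)*r + A$1$2 = 0" "A$2$1*r + A$2$2 - l1 = 0"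
    using i1 unfolding intev_def by blast
  define B where "B = mk2 1 (-r) (-r) (r*r)"
  have BW: "B \<in> W" by (rule W_sym) (simp add: B_def)
  define Y where "Y = \<phi> B"
  define b where "b = (if l1 = lp A then lp B else lm B)"
  have pB: "lp B = (1 - r)^2 / 2" "lm B = (1 + r)^2 / 2" by (simp_all add: B_def lp_def lm_def power2_eq_square algebra_simps)
  have "(1 - r)^2 > 0" "(1 + r)^2 > 0" using r(1) by auto
  hence "lp B > 0" "lm B > 0" unfolding pB by (simp_all only: divide_pos_pos zero_less_numeral)
  hence "lp B \<noteq> 0" "lm B \<noteq> 0" by simp_all
  hence b0: "b \<noteq> 0" by (simp add: b_def)
  have intA: "intev (A + t *\<^sub>R B) l1" for t
    unfolding intev_def using r by (intro exI[of _ r]) (simp add: B_def algebra_simps power2_eq_square)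
  obtain dA where dA: "dA > 0" "\<forall>t. 0 < t \<longrightarrow> t < dA \<longrightarrow> strict (A + t *\<^sub>R B)" using strict_line[OF A(2)] by blast
  obtain dD where dD: "dD > 0" "\<forall>t. 0 < t \<longrightarrow> t < dD \<longrightarrow> strict (D + t *\<^sub>R Y)" using strict_line[OF sD] by blast
  obtain e0 where e0: "e0 > 0" "\<forall>t. 0 < t \<longrightarrow> t < e0 \<longrightarrow> \<not> intev (D + t *\<^sub>R Y) (l1 + t*0)"
    using no_small_intev[OF sD niD] by blast
  obtain e1 where e1: "e1 > 0" "\<forall>t. 0 < t \<longrightarrow> t < e1 \<longrightarrow> \<not> intev (D + t *\<^sub>R Y) (l1 + t*b)"
    using no_small_intev[OF sD niD] by blast
  define d where "d = min (min dA dD) (min e0 e1)"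
  have d: "d > 0" using dA dD e0 e1 by (simp add: d_def)
  have key: "(l1 = lp D + t * lp Y \<or> l1 = lm D + t * lm Y) \<and> (l1 + t*b = lp D + t * lp Y \<or> l1 + t*b = lm D + t * lm Y)"
    if t: "0 < t" "t < d" for t
  proof -
    have stA: "strict (A + t *\<^sub>R B)" using dA t by (simp add: d_def)
    have stD: "strict (D + t *\<^sub>R Y)" using dD t by (simp add: d_def)
    have ni0: "\<not> intev (D + t *\<^sub>R Y) l1" using e0 t by (simp add: d_def)
    have ni1: "\<not> intev (D + t *\<^sub>R Y) (l1 + t*b)" using e1 t by (simp add: d_def)
    have eq: "L_spec (D + t *\<^sub>R Y) = L_spec (A + t *\<^sub>R B)"
      using spec_line[OF A(1) BW] by (simp add: D_def Y_def)
    have "l1 \<in> L_spec (A + t *\<^sub>R B)" using intA by (simp add: L_spec_iff)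
    moreover have "l1 + t*b \<in> L_spec (A + t *\<^sub>R B)" using strict_spec[OF stA] l1in by (auto simp: b_def)
    ultimately have "l1 \<in> L_spec (D + t *\<^sub>R Y)" "l1 + t*b \<in> L_spec (D + t *\<^sub>R Y)" using eq by simp_all
    thus ?thesis using strict_spec[OF stD] ni0 ni1 by auto
  qed
  define t1 where "t1 = d/2" define t2 where "t2 = d/3" define t3 where "t3 = d/4"
  have ts: "t1 \<noteq> t2" "t1 \<noteq> t3" "t2 \<noteq> t3" "t1 > 0" "t2 > 0" "t3 > 0" "t1 < d" "t2 < d" "t3 < d"
    using d by (simp_all add: t1_def t2_def t3_def)
  have tin: "t \<in> {t1,t2,t3} \<Longrightarrow> 0 < t \<and> t < d" for t using ts by auto
  have PP: "(lp D = l1 \<and> lm D = l2) \<or> (lp D = l2 \<and> lm D = l1)" using match l1in l2in n by auto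
  show False
  proof (cases "lp D = l1 \<and> lm D = l2")
    case True
    show False
    proof (rule count3[OF n b0 ts(1-6), of "lp Y" "lm Y"])
      fix t assume "t \<in> {t1,t2,t3}"
      hence tt: "0 < t" "t < d" using tin by auto
      show "(l1 = l1 + t * lp Y \<or> l1 = l2 + t * lm Y) \<and> (l1 + t * b = l1 + t * lp Y \<or> l1 + t * b = l2 + t * lm Y)"
        using key[OF tt, unfolded True[THEN conjunct1] True[THEN conjunct2]] by blast
    qed
  next
    case False
    hence F: "lp D = l2" "lm D = l1" using PP by auto
    show False
    proof (rule count3[OF n b0 ts(1-6), of "lm Y" "lp Y"])
      fix t assume "t \<in> {t1,t2,t3}"
      hence tt: "0 < t" "t < d" using tin by auto
      show "(l1 = l1 + t * lm Y \<or> l1 = l2 + t * lp Y) \<and> (l1 + t * b = l1 + t * lm Y \<or> l1 + t * b = l2 + t * lp Y)"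
        using key[OF tt, unfolded F] by blast
    qed
  qed
qed

end

theorem lemma4p1:
  fixes W :: "(real^2^2) set" and \<phi> :: "real^2^2 \<Rightarrow> real^2^2" and A :: "real^2^2"
  assumes "W = UNIV \<or> W = sym_mats"
    and "\<forall>B\<in>W. \<phi> B \<in> W"
    and "\<forall>B\<in>W. \<forall>C\<in>W. \<phi> (B + C) = \<phi> B + \<phi> C"
    and "\<forall>r. \<forall>B\<in>W. \<phi> (r *\<^sub>R B) = r *\<^sub>R \<phi> B"
    and "\<forall>B\<in>W. L_spec (\<phi> B) = L_spec B"
    and "A \<in> W"
    and "\<exists>lam1 lam2. lam1 \<noteq> lam2 \<and> strict_bd_L_eig A lam1 \<and> strict_bd_L_eig A lam2"
  shows "L_spec_int A = L_spec_int (\<phi> A) \<and> L_spec_int A \<noteq> {} \<and>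
         L_spec_bd A = L_spec_bd (\<phi> A)"
proof -
  interpret pres W \<phi> using assms(1-5) by (rule pres.intro)
  obtain lam1 lam2 where L: "lam1 \<noteq> lam2" "strict_bd_L_eig A lam1" "strict_bd_L_eig A lam2"
    using assms(7) by blast
  have e1: "(A$1$1 + A$2$2 + A$1$2 + A$2$1) / 2 = lp A" by (simp add: lp_def)
  have e2: "(A$1$1 + A$2$2 - A$1$2 - A$2$1) / 2 = lm A" by (simp add: lm_def)
  have e3: "(A$1$1 - A$2$2 < A$2$1 - A$1$2) = (pp A > 0)" by (auto simp: pp_def)
  have e4: "(A$1$1 - A$2$2 < A$1$2 - A$2$1) = (mm A > 0)" by (auto simp: mm_def)
  have sb: "(lam = lp A \<and> pp A > 0) \<or> (lam = lm A \<and> mm A > 0)" if "strict_bd_L_eig A lam" for lam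
    using that unfolding strict_bd_L_eig_def e1 e2 e3 e4 by blast
  have "strict A \<and> lp A \<noteq> lm A"
    using sb[OF L(2)] sb[OF L(3)] L(1) by (elim disjE conjE) (simp_all add: strict_def)
  hence sA: "strict A" and ne: "lp A \<noteq> lm A" by simp_all
  define D where "D = \<phi> A"
  have sD: "strict D" and match: "(lp D = lp A \<and> lm D = lm A) \<or> (lp D = lm A \<and> lm D = lp A)"
    using strict_phi[OF assms(6) sA ne] by (simp_all add: D_def)
  have bd: "L_spec_bd A = L_spec_bd D"
    using strict_bd[OF sA] strict_bd[OF sD] match by auto
  obtain mA where mA: "intev A mA" using strict_intev_ex[OF sA] by blast
  obtain mD where mD: "intev D mD" using strict_intev_ex[OF sD] by blast
  have eqm: "mA = mD" using int_match[OF assms(6) sA ne mA] mD by (simp add: D_def)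
  have IA: "L_spec_int A = {mA}"
  proof (rule set_eqI)
    fix l show "l \<in> L_spec_int A \<longleftrightarrow> l \<in> {mA}"
      unfolding L_spec_int_iff using mA strict_intev_unique[OF sA mA, of l] by blast
  qed
  have ID: "L_spec_int D = {mD}"
  proof (rule set_eqI)
    fix l show "l \<in> L_spec_int D \<longleftrightarrow> l \<in> {mD}"
      unfolding L_spec_int_iff using mD strict_intev_unique[OF sD mD, of l] by blast
  qed
  show ?thesis using IA ID eqm bd by (simp add: D_def)
qed

end
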